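(* Let $\mathcal{H} = \mathbb{C}^{d_1} \otimes \cdots \otimes \mathbb{C}^{d_n}$ and let $|\psi\rangle \in \mathcal{H}$ be a generic unit vector, i.e. $|\psi\rangle$ is not a product state and its best product state approximation is unique up to a global phase. Let $\lambda = \max_{|\pi\rangle} |\langle \pi|\psi\rangle|$ (maximum over product states), and let $|\pi\rangle$ be a best product state approximation chosen (by fixing its phase) so that $\langle \pi|\psi\rangle = \lambda > 0$. Define $$|\eta\rangle = \frac{1}{\sqrt{1-\lambda^2}} \left(\mathbb{1} - |\pi\rangle\langle\pi|\right)|\psi\rangle,$$ and for a step size $\theta > 0$ define the updated state $$|\tilde\psi\rangle = \frac{|\psi\rangle + \theta|\eta\rangle}{\| |\psi\rangle + \theta |\eta\rangle \|}.$$ Then there exists $\Theta > 0$ such that for every $\theta$ with $0 < \theta < \Theta$ one has $G(|\psi\rangle) < G(|\tilde\psi\rangle)$.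
   Context: A product state is a unit vector of the form $|a_1\rangle \otimes \cdots \otimes |a_n\rangle$ with $|a_k\rangle \in \mathbb{C}^{d_k}$. A best product state approximation of a unit vector $|\varphi\rangle$ is a product state $|\pi\rangle$ maximizing $|\langle\pi|\varphi\rangle|^2$ over all product states. The geometric measure of entanglement of a unit vector $|\varphi\rangle$ is $G(|\varphi\rangle) = 1 - \lambda^2(|\varphi\rangle)$, where $\lambda^2(|\varphi\rangle) = \max_{|\pi\rangle \text{ product}} |\langle \pi|\varphi\rangle|^2$. *)

theory Defs
  imports "HOL-Analysis.Analysis"
begin

text \<open>The Hilbert space C^{d_1} (x) ... (x) C^{d_n} is modelled, for a list of local
dimensions d = [d_1,...,d_n], as functions from multi-indices (lists of naturals)
to complex numbers that vanish outside the finite index set idx d.\<close>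

definition idx :: "nat list \<Rightarrow> nat list set" where
  "idx d = {is. length is = length d \<and> (\<forall>k<length d. is ! k < d ! k)}"

definition in_space :: "nat list \<Rightarrow> (nat list \<Rightarrow> complex) \<Rightarrow> bool" where
  "in_space d f \<longleftrightarrow> (\<forall>is. is \<notin> idx d \<longrightarrow> f is = 0)"

definition inner_t :: "nat list \<Rightarrow> (nat list \<Rightarrow> complex) \<Rightarrow> (nat list \<Rightarrow> complex) \<Rightarrow> complex" where
  "inner_t d f g = (\<Sum>is\<in>idx d. cnj (f is) * g is)"

definition norm_t :: "nat list \<Rightarrow> (nat list \<Rightarrow> complex) \<Rightarrow> real" where
  "norm_t d f = sqrt (\<Sum>is\<in>idx d. (cmod (f is))\<^sup>2)"

definition unit_vec :: "nat list \<Rightarrow> (nat list \<Rightarrow> complex) \<Rightarrow> bool" where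
  "unit_vec d f \<longleftrightarrow> in_space d f \<and> norm_t d f = 1"

definition product_state :: "nat list \<Rightarrow> (nat list \<Rightarrow> complex) \<Rightarrow> bool" where
  "product_state d p \<longleftrightarrow>
     (\<exists>a :: nat \<Rightarrow> nat \<Rightarrow> complex.
        (\<forall>k<length d. (\<Sum>j<d ! k. (cmod (a k j))\<^sup>2) = 1) \<and>
        p = (\<lambda>is. if is \<in> idx d then (\<Prod>k<length d. a k (is ! k)) else 0))"

text \<open>lambda^2(phi) = max over product states pi of |<pi|phi>|^2 (the maximum is attained
by compactness, so it equals the supremum).\<close>
definition lambda2 :: "nat list \<Rightarrow> (nat list \<Rightarrow> complex) \<Rightarrow> real" where
  "lambda2 d f = (SUP p\<in>{p. product_state d p}. (cmod (inner_t d p f))\<^sup>2)"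

definition best_approx :: "nat list \<Rightarrow> (nat list \<Rightarrow> complex) \<Rightarrow> (nat list \<Rightarrow> complex) \<Rightarrow> bool" where
  "best_approx d f p \<longleftrightarrow> product_state d p \<and>
     (\<forall>q. product_state d q \<longrightarrow> (cmod (inner_t d q f))\<^sup>2 \<le> (cmod (inner_t d p f))\<^sup>2)"

definition GME :: "nat list \<Rightarrow> (nat list \<Rightarrow> complex) \<Rightarrow> real" where
  "GME d f = 1 - lambda2 d f"

definition generic :: "nat list \<Rightarrow> (nat list \<Rightarrow> complex) \<Rightarrow> bool" where
  "generic d f \<longleftrightarrow> unit_vec d f \<and> \<not> product_state d f \<and>
     (\<forall>p q. best_approx d f p \<longrightarrow> best_approx d f q \<longrightarrow>
        (\<exists>c. cmod c = 1 \<and> q = (\<lambda>is. c * p is)))"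

end

theory Submission
  imports Defs "HOL-Analysis.Analysis"
begin


lemma finite_BW:
  fixes f :: "nat \<Rightarrow> 'i \<Rightarrow> complex"
  assumes "finite S" and "\<And>m i. i \<in> S \<Longrightarrow> cmod (f m i) \<le> B"
  shows "\<exists>r. strict_mono r \<and> (\<forall>i\<in>S. \<exists>l. (\<lambda>m. f (r m) i) \<longlonglongrightarrow> l)"
  using assms
proof (induction S rule: finite_induct)
  case empty
  then show ?case by (auto intro: strict_mono_id[unfolded id_def])
next
  case (insert x S)
  then obtain r where r: "strict_mono r" "\<forall>i\<in>S. \<exists>l. (\<lambda>m. f (r m) i) \<longlonglongrightarrow> l" by auto
  have "bounded (range (\<lambda>m. f (r m) x))"
    using insert.prems unfolding bounded_iff by auto
  then obtain l r' where r': "strict_mono r'" "((\<lambda>m. f (r m) x) \<circ> r') \<longlonglongrightarrow> l"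
    using bounded_imp_convergent_subsequence by blast
  have "strict_mono (r \<circ> r')" using r r' by (simp add: strict_mono_o)
  moreover have "\<forall>i\<in>insert x S. \<exists>l. (\<lambda>m. f ((r \<circ> r') m) i) \<longlonglongrightarrow> l"
  proof
    fix i assume "i \<in> insert x S"
    then show "\<exists>l. (\<lambda>m. f ((r \<circ> r') m) i) \<longlonglongrightarrow> l"
    proof
      assume "i = x" then show ?thesis using r' by (auto simp: o_def)
    next
      assume "i \<in> S"
      then obtain l where "(\<lambda>m. f (r m) i) \<longlonglongrightarrow> l" using r by auto
      from LIMSEQ_subseq_LIMSEQ[OF this r'(1)] show ?thesis by (auto simp: o_def)
    qed
  qed
  ultimately show ?case by blast
qed

lemma finite_idx: "finite (idx d)"
proof -
  have "idx d \<subseteq> {xs. set xs \<subseteq> {..<sum_list d} \<and> length xs = length d}"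
  proof
    fix xs assume "xs \<in> idx d"
    then have l: "length xs = length d" and b: "\<forall>k<length d. xs ! k < d ! k" by (auto simp: idx_def)
    have "set xs \<subseteq> {..<sum_list d}"
    proof
      fix y assume "y \<in> set xs"
      then obtain k where "k < length xs" "xs ! k = y" by (auto simp: in_set_conv_nth)
      then show "y \<in> {..<sum_list d}" using b l elem_le_sum_list[of k d] by fastforce
    qed
    then show "xs \<in> {xs. set xs \<subseteq> {..<sum_list d} \<and> length xs = length d}" using l by auto
  qed
  then show ?thesis by (rule finite_subset) (rule finite_lists_length_eq, simp)
qed

lemma idx_Nil: "idx [] = {[]}" by (auto simp: idx_def)

lemma idx_Cons: "idx (x # d) = (\<lambda>(j, is). j # is) ` ({..<x} \<times> idx d)"
proof (rule set_eqI, rule iffI)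
  fix xs assume "xs \<in> idx (x # d)"
  then have l: "length xs = Suc (length d)" and b: "\<forall>k<Suc (length d). xs ! k < (x#d) ! k"
    by (auto simp: idx_def)
  then obtain j ys where xs: "xs = j # ys" by (cases xs) auto
  have "j < x" using b xs by (metis nth_Cons_0 zero_less_Suc)
  moreover have "ys \<in> idx d" using l b xs by (auto simp: idx_def)
  ultimately show "xs \<in> (\<lambda>(j, is). j # is) ` ({..<x} \<times> idx d)" using xs by auto
next
  fix xs assume "xs \<in> (\<lambda>(j, is). j # is) ` ({..<x} \<times> idx d)"
  then obtain j ys where "xs = j # ys" "j < x" "ys \<in> idx d" by auto
  then show "xs \<in> idx (x # d)" by (auto simp: idx_def less_Suc_eq_0_disj)
qed

lemma sum_prod_idx:
  fixes g :: "nat \<Rightarrow> nat \<Rightarrow> 'a::comm_semiring_1"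
  shows "(\<Sum>is\<in>idx d. \<Prod>k<length d. g k (is ! k)) = (\<Prod>k<length d. \<Sum>j<d ! k. g k j)"
proof (induction d arbitrary: g)
  case Nil
  then show ?case by (simp add: idx_Nil)
next
  case (Cons x d)
  have inj: "inj_on (\<lambda>(j, is). j # is) ({..<x} \<times> idx d)" by (auto simp: inj_on_def)
  have "(\<Sum>is\<in>idx (x#d). \<Prod>k<length (x#d). g k (is ! k))
      = (\<Sum>(j,is)\<in>{..<x} \<times> idx d. \<Prod>k<Suc (length d). g k ((j#is) ! k))"
    unfolding idx_Cons sum.reindex[OF inj] by (simp only: o_def length_Cons split_def)
  also have "\<dots> = (\<Sum>(j,is)\<in>{..<x} \<times> idx d. g 0 j * (\<Prod>k<length d. g (Suc k) (is ! k)))"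
    by (simp only: prod.lessThan_Suc_shift nth_Cons_0 nth_Cons_Suc)
  also have "\<dots> = (\<Sum>j<x. \<Sum>is\<in>idx d. g 0 j * (\<Prod>k<length d. g (Suc k) (is ! k)))"
    by (simp add: sum.cartesian_product)
  also have "\<dots> = (\<Sum>j<x. g 0 j) * (\<Sum>is\<in>idx d. (\<Prod>k<length d. g (Suc k) (is ! k)))"
    by (simp only: sum_product)
  also have "\<dots> = (\<Sum>j<x. g 0 j) * (\<Prod>k<length d. \<Sum>j<d ! k. g (Suc k) j)"
    using Cons.IH[of "\<lambda>k. g (Suc k)"] by simp
  also have "\<dots> = (\<Prod>k<length (x#d). \<Sum>j<(x#d) ! k. g k j)"
    unfolding length_Cons prod.lessThan_Suc_shift by simp
  finally show ?case .
qed



lemma ps_param_bound: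
  fixes m :: nat
  assumes "(\<Sum>j<m. (cmod (a j))\<^sup>2) = 1" "j < m"
  shows "cmod (a j) \<le> 1"
proof -
  have "(cmod (a j))\<^sup>2 \<le> (\<Sum>j<m. (cmod (a j))\<^sup>2)"
    using assms by (intro member_le_sum) auto
  then have "(cmod (a j))\<^sup>2 \<le> 1" using assms by simp
  then show ?thesis by (simp add: power_le_one_iff)
qed

lemma ps_zero: "product_state d p \<Longrightarrow> is \<notin> idx d \<Longrightarrow> p is = 0"
  by (auto simp: product_state_def)

lemma ps_bound:
  assumes "product_state d p" shows "cmod (p is) \<le> 1"
proof -
  obtain a where a: "\<forall>k<length d. (\<Sum>j<d ! k. (cmod (a k j))\<^sup>2) = 1"
    "p = (\<lambda>is. if is \<in> idx d then (\<Prod>k<length d. a k (is ! k)) else 0)"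
    using assms unfolding product_state_def by blast
  show ?thesis
  proof (cases "is \<in> idx d")
    case True
    then have "cmod (p is) = (\<Prod>k<length d. cmod (a k (is ! k)))"
      using a(2) by (simp add: prod_norm)
    also have "\<dots> \<le> 1"
    proof (rule prod_le_1)
      fix k assume "k \<in> {..<length d}"
      then have "k < length d" "is ! k < d ! k" using True by (auto simp: idx_def)
      then show "0 \<le> cmod (a k (is ! k)) \<and> cmod (a k (is ! k)) \<le> 1"
        using a(1) ps_param_bound[where m="d ! k" and a="a k"] by auto
    qed
    finally show ?thesis .
  qed (simp add: a)
qed

lemma ps_norm:
  assumes "product_state d p" shows "(\<Sum>is\<in>idx d. (cmod (p is))\<^sup>2) = 1"
proof -
  obtain a where a: "\<forall>k<length d. (\<Sum>j<d ! k. (cmod (a k j))\<^sup>2) = 1"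
    "p = (\<lambda>is. if is \<in> idx d then (\<Prod>k<length d. a k (is ! k)) else 0)"
    using assms unfolding product_state_def by blast
  have "(\<Sum>is\<in>idx d. (cmod (p is))\<^sup>2) = (\<Sum>is\<in>idx d. \<Prod>k<length d. (cmod (a k (is ! k)))\<^sup>2)"
    by (rule sum.cong) (auto simp: a(2) prod_norm[symmetric] prod_power_distrib)
  also have "\<dots> = (\<Prod>k<length d. \<Sum>j<d ! k. (cmod (a k j))\<^sup>2)"
    by (rule sum_prod_idx)
  also have "\<dots> = 1" using a(1) by simp
  finally show ?thesis .
qed

lemma inner_self: "inner_t d f f = complex_of_real (\<Sum>is\<in>idx d. (cmod (f is))\<^sup>2)"
  unfolding inner_t_def of_real_sum by (rule sum.cong) (simp_all add: complex_norm_square[symmetric] mult.commute)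

lemma ps_inner_self: "product_state d p \<Longrightarrow> inner_t d p p = 1"
  using ps_norm[of d p] inner_self[of d p] by simp

lemma norm_sq_comb_pt:
  fixes f g :: complex and x y :: real
  shows "(cmod (complex_of_real x * f + complex_of_real y * g))\<^sup>2
     = x\<^sup>2 * (cmod f)\<^sup>2 + 2 * x * y * Re (cnj f * g) + y\<^sup>2 * (cmod g)\<^sup>2"
  unfolding cmod_power2 by (simp add: power2_eq_square algebra_simps)

lemma norm_sq_comb:
  fixes x y :: real
  shows "(\<Sum>is\<in>I. (cmod (complex_of_real x * f is + complex_of_real y * g is))\<^sup>2)
     = x\<^sup>2 * (\<Sum>is\<in>I. (cmod (f is))\<^sup>2) + 2 * x * y * Re (\<Sum>is\<in>I. cnj (f is) * g is)
       + y\<^sup>2 * (\<Sum>is\<in>I. (cmod (g is))\<^sup>2)"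
  by (simp add: norm_sq_comb_pt sum.distrib sum_distrib_left[symmetric] Re_sum del: complex_cnj_mult)

lemma basis_ps:
  assumes "is0 \<in> idx d"
  shows "product_state d (\<lambda>is. if is = is0 then 1 else 0)"
proof -
  define a where "a = (\<lambda>k j. if j = is0 ! k then (1::complex) else 0)"
  have n: "\<forall>k<length d. (\<Sum>j<d ! k. (cmod (a k j))\<^sup>2) = 1"
  proof (intro allI impI)
    fix k assume "k < length d"
    then have "is0 ! k < d ! k" using assms by (auto simp: idx_def)
    then show "(\<Sum>j<d ! k. (cmod (a k j))\<^sup>2) = 1"
      unfolding a_def by (simp add: if_distrib[of "\<lambda>x. (cmod x)\<^sup>2"] cong: if_cong)
  qed
  have e: "(\<lambda>is. if is = is0 then 1 else 0) =
      (\<lambda>is. if is \<in> idx d then (\<Prod>k<length d. a k (is ! k)) else 0)"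
  proof
    fix js
    show "(if js = is0 then 1 else 0) = (if js \<in> idx d then (\<Prod>k<length d. a k (js ! k)) else 0)"
    proof (cases "js = is0")
      case True then show ?thesis using assms by (simp add: a_def)
    next
      case False
      show ?thesis
      proof (cases "js \<in> idx d")
        case True
        then have "length js = length is0" using assms by (auto simp: idx_def)
        with False obtain k where k: "k < length d" "js ! k \<noteq> is0 ! k"
        proof -
          have "\<not> (\<forall>i<length js. js ! i = is0 ! i)"
            using False nth_equalityI[OF \<open>length js = length is0\<close>] by blast
          moreover have "length js = length d" using True by (simp add: idx_def)
          ultimately show ?thesis using that by auto
        qed
        then have "(\<Prod>k<length d. a k (js ! k)) = 0"
          by (intro prod_zero) (auto simp: a_def)
        then show ?thesis using False True by simp
      qed (use False in simp)
    qed
  qed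
  show ?thesis unfolding product_state_def using n e by blast
qed

lemma ps_seq_compact:
  fixes q :: "nat \<Rightarrow> nat list \<Rightarrow> complex"
  assumes "\<And>m. product_state d (q m)"
  shows "\<exists>r p. strict_mono r \<and> product_state d p \<and> (\<forall>is. (\<lambda>m. q (r m) is) \<longlonglongrightarrow> p is)"
proof -
  have "\<forall>m. \<exists>a. (\<forall>k<length d. (\<Sum>j<d ! k. (cmod (a k j))\<^sup>2) = 1) \<and>
        q m = (\<lambda>is. if is \<in> idx d then (\<Prod>k<length d. a k (is ! k)) else 0)"
    using assms unfolding product_state_def by blast
  then obtain a where a: "\<And>m. \<forall>k<length d. (\<Sum>j<d ! k. (cmod (a m k j))\<^sup>2) = 1"
    "\<And>m. q m = (\<lambda>is. if is \<in> idx d then (\<Prod>k<length d. a m k (is ! k)) else 0)"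
    by metis
  define S where "S = {(k, j). k < length d \<and> j < d ! k}"
  have fS: "finite S"
  proof -
    have "S \<subseteq> {..<length d} \<times> {..<sum_list d}"
      using elem_le_sum_list by (fastforce simp: S_def)
    then show ?thesis by (rule finite_subset) simp
  qed
  have bS: "\<And>m i. i \<in> S \<Longrightarrow> cmod ((\<lambda>m i. a m (fst i) (snd i)) m i) \<le> 1"
  proof -
    fix m i assume "i \<in> S"
    then have "fst i < length d" "snd i < d ! fst i" by (auto simp: S_def)
    then show "cmod ((\<lambda>m i. a m (fst i) (snd i)) m i) \<le> 1"
      using a(1)[of m] ps_param_bound[where m="d ! fst i" and a="a m (fst i)"] by auto
  qed
  obtain r where r: "strict_mono r" "\<forall>i\<in>S. \<exists>l. (\<lambda>m. a (r m) (fst i) (snd i)) \<longlonglongrightarrow> l"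
    using finite_BW[of S "\<lambda>m i. a m (fst i) (snd i)" 1, OF fS bS] by auto
  define b where "b = (\<lambda>k j. lim (\<lambda>m. a (r m) k j))"
  have conv: "\<And>k j. k < length d \<Longrightarrow> j < d ! k \<Longrightarrow> (\<lambda>m. a (r m) k j) \<longlonglongrightarrow> b k j"
  proof -
    fix k j assume "k < length d" "j < d ! k"
    then obtain l where "(\<lambda>m. a (r m) k j) \<longlonglongrightarrow> l" using r(2) by (force simp: S_def)
    then show "(\<lambda>m. a (r m) k j) \<longlonglongrightarrow> b k j" unfolding b_def by (simp add: limI)
  qed
  have bn: "\<forall>k<length d. (\<Sum>j<d ! k. (cmod (b k j))\<^sup>2) = 1"
  proof (intro allI impI)
    fix k assume k: "k < length d"
    have "(\<lambda>m. \<Sum>j<d ! k. (cmod (a (r m) k j))\<^sup>2) \<longlonglongrightarrow> (\<Sum>j<d ! k. (cmod (b k j))\<^sup>2)"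
      by (intro tendsto_intros conv k) simp
    moreover have "(\<lambda>m. \<Sum>j<d ! k. (cmod (a (r m) k j))\<^sup>2) = (\<lambda>m. 1)" using a(1) k by simp
    ultimately show "(\<Sum>j<d ! k. (cmod (b k j))\<^sup>2) = 1"
      using LIMSEQ_unique tendsto_const by metis
  qed
  define p where "p = (\<lambda>is. if is \<in> idx d then (\<Prod>k<length d. b k (is ! k)) else 0)"
  have ps: "product_state d p" unfolding product_state_def p_def using bn by blast
  have "\<forall>is. (\<lambda>m. q (r m) is) \<longlonglongrightarrow> p is"
  proof
    fix js
    show "(\<lambda>m. q (r m) js) \<longlonglongrightarrow> p js"
    proof (cases "js \<in> idx d")
      case True
      then have "(\<lambda>m. \<Prod>k<length d. a (r m) k (js ! k)) \<longlonglongrightarrow> (\<Prod>k<length d. b k (js ! k))"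
        by (intro tendsto_prod conv) (auto simp: idx_def)
      then show ?thesis using True by (simp add: a(2) p_def)
    qed (simp add: a(2) p_def)
  qed
  then show ?thesis using r(1) ps by blast
qed

lemma inner_tendsto:
  assumes "\<forall>is. (\<lambda>m. q m is) \<longlonglongrightarrow> p is"
  shows "(\<lambda>m. inner_t d (q m) f) \<longlonglongrightarrow> inner_t d p f"
  unfolding inner_t_def using assms by (intro tendsto_intros) auto



lemma inner_lin2:
  "inner_t d f (\<lambda>is. a * g is + b * h is) = a * inner_t d f g + b * inner_t d f h"
  unfolding inner_t_def by (simp add: sum.distrib sum_distrib_left algebra_simps)

lemma inner_scal1: "inner_t d (\<lambda>is. c * p is) g = cnj c * inner_t d p g"
  unfolding inner_t_def by (simp add: sum_distrib_left algebra_simps)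

lemma inner_div2: "inner_t d f (\<lambda>is. g is / c) = inner_t d f g / c"
  unfolding inner_t_def by (simp add: sum_divide_distrib)

lemma inner_bound:
  assumes "product_state d q"
  shows "cmod (inner_t d q f) \<le> (\<Sum>is\<in>idx d. cmod (f is))"
proof -
  have "cmod (inner_t d q f) \<le> (\<Sum>is\<in>idx d. cmod (cnj (q is) * f is))"
    unfolding inner_t_def by (rule norm_sum)
  also have "\<dots> \<le> (\<Sum>is\<in>idx d. cmod (f is))"
  proof (rule sum_mono)
    fix js
    have "cmod (q js) \<le> 1" using ps_bound[OF assms] .
    then show "cmod (cnj (q js) * f js) \<le> cmod (f js)"
      by (simp add: norm_mult mult_left_le_one_le)
  qed
  finally show ?thesis .
qed

lemma Fexp:
  fixes l t m :: real and b c :: complex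
  shows "(cmod (complex_of_real l * b + complex_of_real t * c))\<^sup>2 - l\<^sup>2 * (l\<^sup>2 + t\<^sup>2)
    = ((cmod (complex_of_real l * b + complex_of_real m * c))\<^sup>2 - l\<^sup>2 * (l\<^sup>2 + m\<^sup>2))
      + (2 * l * Re (cnj b * c) + 2 * m * ((cmod c)\<^sup>2 - l\<^sup>2)) * (t - m)
      + ((cmod c)\<^sup>2 - l\<^sup>2) * (t - m)\<^sup>2"
  unfolding cmod_power2 by (simp add: power2_eq_square algebra_simps)

lemma stepB:
  fixes l m K \<rho> :: real and B C :: "'q \<Rightarrow> complex"
  assumes l: "l > 0" and m: "m > 0" and lm: "l\<^sup>2 + m\<^sup>2 = 1" and \<rho>: "\<rho> > 0"
    and K: "\<forall>q\<in>Q. cmod (B q) \<le> K \<and> cmod (C q) \<le> K"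
    and F0: "\<forall>q\<in>Q. (cmod (complex_of_real l * B q + complex_of_real m * C q))\<^sup>2 \<le> l\<^sup>2"
    and FA: "\<forall>q\<in>Q. (cmod (complex_of_real l * B q + complex_of_real m * C q))\<^sup>2 - l\<^sup>2 > - \<rho> \<longrightarrow>
               2 * l * Re (cnj (B q) * C q) + 2 * m * ((cmod (C q))\<^sup>2 - l\<^sup>2) \<le> - (m * l\<^sup>2)"
  shows "\<exists>\<Theta>>0. \<forall>\<theta>. 0 < \<theta> \<and> \<theta> < \<Theta> \<longrightarrow> (\<exists>e>0. \<forall>q\<in>Q.
     (cmod (complex_of_real l * B q + complex_of_real (m + \<theta>) * C q))\<^sup>2 \<le> l\<^sup>2 * (l\<^sup>2 + (m + \<theta>)\<^sup>2) - e)"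
proof -
  define M where "M = 2 * l * K * K + 2 * m * (K * K + l\<^sup>2) + (K * K + l\<^sup>2) + 1"
  have K0: "K \<ge> 0" if "q \<in> Q" for q using K that norm_ge_zero order_trans by metis
  have M1: "M \<ge> 1" if "q \<in> Q" for q
    using K0[OF that] l m unfolding M_def by (simp add: zero_le_mult_iff)
  define \<Theta> where "\<Theta> = min 1 (min (\<rho> / (4 * M)) (m * l\<^sup>2 / (2 * M)))"
  show ?thesis
  proof (cases "Q = {}")
    case True
    then show ?thesis by (intro exI[of _ 1]) (auto intro: exI[of _ 1])
  next
    case False
    then obtain q0 where "q0 \<in> Q" by auto
    note Mge = M1[OF this]
    have Mpos: "M > 0" using Mge by simp
    have ml: "m * l\<^sup>2 > 0" using l m by simp
    have Th: "\<Theta> > 0" unfolding \<Theta>_def using Mpos \<rho> ml by simp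
    have "\<forall>\<theta>. 0 < \<theta> \<and> \<theta> < \<Theta> \<longrightarrow> (\<exists>e>0. \<forall>q\<in>Q.
       (cmod (complex_of_real l * B q + complex_of_real (m + \<theta>) * C q))\<^sup>2 \<le> l\<^sup>2 * (l\<^sup>2 + (m + \<theta>)\<^sup>2) - e)"
    proof (intro allI impI)
      fix s assume s: "0 < s \<and> s < \<Theta>"
      have s1: "s \<le> 1" and s2: "s * (4 * M) \<le> \<rho>" and s3: "s * (2 * M) \<le> m * l\<^sup>2"
        using s Mpos unfolding \<Theta>_def by (auto simp: field_simps)
      define e where "e = min (\<rho> / 2) (m * l\<^sup>2 * s / 2)"
      have e0: "e > 0" unfolding e_def using \<rho> ml s by simp
      have "\<forall>q\<in>Q. (cmod (complex_of_real l * B q + complex_of_real (m + s) * C q))\<^sup>2 \<le> l\<^sup>2 * (l\<^sup>2 + (m + s)\<^sup>2) - e"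
      proof
        fix q assume q: "q \<in> Q"
        define Fm where "Fm = (cmod (complex_of_real l * B q + complex_of_real m * C q))\<^sup>2 - l\<^sup>2 * (l\<^sup>2 + m\<^sup>2)"
        define Fd where "Fd = 2 * l * Re (cnj (B q) * C q) + 2 * m * ((cmod (C q))\<^sup>2 - l\<^sup>2)"
        define Cc where "Cc = (cmod (C q))\<^sup>2 - l\<^sup>2"
        have E: "(cmod (complex_of_real l * B q + complex_of_real (m + s) * C q))\<^sup>2 - l\<^sup>2 * (l\<^sup>2 + (m + s)\<^sup>2)
            = Fm + Fd * s + Cc * s\<^sup>2"
          unfolding Fm_def Fd_def Cc_def using Fexp[where l=l and t="m + s" and m=m and b="B q" and c="C q"] by simp
        have bB: "cmod (B q) \<le> K" and bC: "cmod (C q) \<le> K" using K q by auto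
        have "\<bar>Re (cnj (B q) * C q)\<bar> \<le> K * K"
        proof -
          have "\<bar>Re (cnj (B q) * C q)\<bar> \<le> cmod (cnj (B q) * C q)" by (rule abs_Re_le_cmod)
          also have "\<dots> = cmod (B q) * cmod (C q)" by (simp add: norm_mult)
          also have "\<dots> \<le> K * K" using bB bC using K0[OF q] by (intro mult_mono) auto
          finally show ?thesis .
        qed
        moreover have "(cmod (C q))\<^sup>2 \<le> K * K" using bC K0[OF q] by (simp add: power2_eq_square mult_mono)
        ultimately have aFd: "\<bar>Fd\<bar> \<le> M" and aCc: "\<bar>Cc\<bar> \<le> M"
        proof -
          assume R: "\<bar>Re (cnj (B q) * C q)\<bar> \<le> K * K" and X: "(cmod (C q))\<^sup>2 \<le> K * K"
          have X0: "0 \<le> (cmod (C q))\<^sup>2" by simp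
          have l2: "0 \<le> l\<^sup>2" by simp
          have aC: "\<bar>Cc\<bar> \<le> K * K + l\<^sup>2" unfolding Cc_def using X X0 l2 by linarith
          have "\<bar>2 * l * Re (cnj (B q) * C q)\<bar> = 2 * l * \<bar>Re (cnj (B q) * C q)\<bar>"
            using l by (simp add: abs_mult)
          also have "\<dots> \<le> 2 * l * (K * K)" using R l by (intro mult_left_mono) auto
          finally have a1: "\<bar>2 * l * Re (cnj (B q) * C q)\<bar> \<le> 2 * l * K * K" by simp
          have "\<bar>2 * m * Cc\<bar> = 2 * m * \<bar>Cc\<bar>" using m by (simp add: abs_mult)
          also have "\<dots> \<le> 2 * m * (K * K + l\<^sup>2)" using aC m by (intro mult_left_mono) auto
          finally have a2: "\<bar>2 * m * Cc\<bar> \<le> 2 * m * (K * K + l\<^sup>2)" .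
          have "Fd = 2 * l * Re (cnj (B q) * C q) + 2 * m * Cc" unfolding Fd_def Cc_def ..
          then have "\<bar>Fd\<bar> \<le> 2 * l * K * K + 2 * m * (K * K + l\<^sup>2)" using a1 a2 by linarith
          then show "\<bar>Fd\<bar> \<le> M" unfolding M_def using aC by linarith
          show "\<bar>Cc\<bar> \<le> M" unfolding M_def using aC a1 a2 by linarith
        qed
        have t1: "Fd * s \<le> M * s" using aFd s by (intro mult_right_mono) auto
        have t2: "Cc * s\<^sup>2 \<le> M * s"
        proof -
          have "Cc * s\<^sup>2 \<le> M * s\<^sup>2" using aCc s by (intro mult_right_mono) auto
          also have "\<dots> \<le> M * s" using s s1 Mpos by (simp add: power2_eq_square mult_left_le_one_le)
          finally show ?thesis .
        qed
        have Fm_le: "Fm \<le> 0" using F0 q lm unfolding Fm_def by auto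
        have "Fm + Fd * s + Cc * s\<^sup>2 \<le> - e"
        proof (cases "Fm > - \<rho>")
          case True
          then have "Fd \<le> - (m * l\<^sup>2)" using FA q lm unfolding Fm_def Fd_def by auto
          then have "Fd * s \<le> - (m * l\<^sup>2) * s" using s by (intro mult_right_mono) auto
          moreover have "Cc * s\<^sup>2 \<le> m * l\<^sup>2 * s / 2"
          proof -
            have "Cc * s\<^sup>2 \<le> M * s\<^sup>2" using aCc s by (intro mult_right_mono) auto
            also have "\<dots> = (s * (2 * M)) * s / 2" by (simp add: power2_eq_square)
            also have "\<dots> \<le> (m * l\<^sup>2) * s / 2" using s3 s by (intro divide_right_mono mult_right_mono) auto
            finally show ?thesis .
          qed
          ultimately have "Fm + Fd * s + Cc * s\<^sup>2 \<le> - (m * l\<^sup>2 * s / 2)" using Fm_le by simp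
          then show ?thesis unfolding e_def by linarith
        next
          case False
          have "M * s \<le> \<rho> / 4" using s2 by (simp add: algebra_simps)
          then have "Fm + Fd * s + Cc * s\<^sup>2 \<le> - (\<rho> / 2)" using False t1 t2 by linarith
          then show ?thesis unfolding e_def by linarith
        qed
        with E show "(cmod (complex_of_real l * B q + complex_of_real (m + s) * C q))\<^sup>2 \<le> l\<^sup>2 * (l\<^sup>2 + (m + s)\<^sup>2) - e"
          by linarith
      qed
      with e0 show "\<exists>e>0. \<forall>q\<in>Q. (cmod (complex_of_real l * B q + complex_of_real (m + s) * C q))\<^sup>2 \<le> l\<^sup>2 * (l\<^sup>2 + (m + s)\<^sup>2) - e"
        by blast
    qed
    with Th show ?thesis by blast
  qed
qed



theorem mainTheorem4:
  fixes d :: "nat list" and psi pi :: "nat list \<Rightarrow> complex"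
  assumes "length d \<ge> 1"
    and "generic d psi"
    and "best_approx d psi pi"
    and "inner_t d pi psi = complex_of_real (sqrt (lambda2 d psi))"
  shows "let lam = sqrt (lambda2 d psi);
             eta = (\<lambda>is. complex_of_real (1 / sqrt (1 - lam\<^sup>2)) *
                          (psi is - inner_t d pi psi * pi is));
             psit = (\<lambda>\<theta>::real. (\<lambda>is. (psi is + complex_of_real \<theta> * eta is) /
                          complex_of_real (norm_t d (\<lambda>js. psi js + complex_of_real \<theta> * eta js))))
         in \<exists>\<Theta>>0. \<forall>\<theta>. 0 < \<theta> \<and> \<theta> < \<Theta> \<longrightarrow> GME d psi < GME d (psit \<theta>)"
proof -
  note gen = assms(2) and best = assms(3) and ph = assms(4)
  have piP: "product_state d pi" using best by (simp add: best_approx_def)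
  have piN: "inner_t d pi pi = 1" using ps_inner_self[OF piP] .
  have piN': "(\<Sum>is\<in>idx d. (cmod (pi is))\<^sup>2) = 1" using ps_norm[OF piP] .
  have L2: "lambda2 d psi = (cmod (inner_t d pi psi))\<^sup>2"
    unfolding lambda2_def
    by (rule cSup_eq_maximum) (use best piP in \<open>auto simp: best_approx_def\<close>)
  define lam where "lam = sqrt (lambda2 d psi)"
  have lam0: "lam \<ge> 0" unfolding lam_def using L2 by simp
  have lamsq: "lam\<^sup>2 = lambda2 d psi" unfolding lam_def using L2 by simp
  have ph': "inner_t d pi psi = complex_of_real lam" using ph unfolding lam_def .
  have psiU: "unit_vec d psi" using gen by (simp add: generic_def)
  have psiN: "(\<Sum>is\<in>idx d. (cmod (psi is))\<^sup>2) = 1"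
    using psiU unfolding unit_vec_def norm_t_def by simp
  have psiS: "in_space d psi" using psiU unfolding unit_vec_def by simp
  have bestq: "\<And>q. product_state d q \<Longrightarrow> (cmod (inner_t d q psi))\<^sup>2 \<le> lam\<^sup>2"
    using best lamsq L2 by (auto simp: best_approx_def)
  have dist: "(\<Sum>is\<in>idx d. (cmod (complex_of_real (-1) * pi is + complex_of_real 1 * psi is))\<^sup>2) = 2 - 2 * lam"
    unfolding norm_sq_comb using piN' psiN ph' unfolding inner_t_def by simp
  have lam1: "lam < 1"
  proof (rule ccontr)
    assume "\<not> lam < 1"
    moreover have "0 \<le> 2 - 2 * lam" using dist[symmetric] by (simp add: sum_nonneg)
    ultimately have "lam = 1" by simp
    then have "(\<Sum>is\<in>idx d. (cmod (complex_of_real (-1) * pi is + complex_of_real 1 * psi is))\<^sup>2) = 0"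
      using dist by simp
    then have "\<forall>is\<in>idx d. (cmod (complex_of_real (-1) * pi is + complex_of_real 1 * psi is))\<^sup>2 = 0"
      by (subst (asm) sum_nonneg_eq_0_iff[OF finite_idx]) auto
    then have "\<forall>is\<in>idx d. psi is = pi is" by auto
    moreover have "\<forall>is. is \<notin> idx d \<longrightarrow> psi is = pi is"
      using psiS ps_zero[OF piP] by (auto simp: in_space_def)
    ultimately have "psi = pi" by auto
    then show False using gen piP by (simp add: generic_def)
  qed
  have lampos: "lam > 0"
  proof -
    obtain is0 where is0: "is0 \<in> idx d" "psi is0 \<noteq> 0"
      using psiN by (metis (no_types, lifting) norm_zero power_zero_numeral sum.neutral zero_neq_one)
    define e where "e = (\<lambda>is. if is = is0 then (1::complex) else 0)"
    have eP: "product_state d e" unfolding e_def by (rule basis_ps[OF is0(1)])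
    have "inner_t d e psi = (\<Sum>is\<in>idx d. if is = is0 then psi is else 0)"
      unfolding inner_t_def e_def by (rule sum.cong) auto
    also have "\<dots> = psi is0" using is0(1) finite_idx by (simp add: sum.delta)
    finally have "inner_t d e psi = psi is0" .
    then have "(cmod (psi is0))\<^sup>2 \<le> lam\<^sup>2" using bestq[OF eP] by simp
    moreover have "(cmod (psi is0))\<^sup>2 > 0" using is0 by simp
    ultimately show ?thesis using lam0 by (cases "lam = 0") auto
  qed
  define mu where "mu = sqrt (1 - lam\<^sup>2)"
  have lam2lt: "lam\<^sup>2 < 1" using lam1 lam0 power_strict_mono[of lam 1 2] by simp
  have mupos: "mu > 0" unfolding mu_def using lam2lt by simp
  have musq: "mu\<^sup>2 = 1 - lam\<^sup>2" unfolding mu_def using lam2lt by simp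
  define eta where "eta = (\<lambda>is. complex_of_real (1 / sqrt (1 - lam\<^sup>2)) *
                          (psi is - inner_t d pi psi * pi is))"
  have eta': "eta = (\<lambda>is. complex_of_real (1 / mu) * (psi is - complex_of_real lam * pi is))"
    unfolding eta_def mu_def ph' ..
  have dec: "\<And>is. psi is = complex_of_real lam * pi is + complex_of_real mu * eta is"
    unfolding eta' using mupos by (simp add: field_simps)
  have pieta: "inner_t d pi eta = 0"
  proof -
    have "eta = (\<lambda>is. complex_of_real (1 / mu) * psi is + complex_of_real (- lam / mu) * pi is)"
      unfolding eta' by (rule ext) (simp add: diff_divide_distrib)
    then have "inner_t d pi eta = complex_of_real (1 / mu) * inner_t d pi psi + complex_of_real (- lam / mu) * inner_t d pi pi"
      using inner_lin2 by metis
    then show ?thesis using piN ph' mupos by (simp add: field_simps)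
  qed
  have etaN: "(\<Sum>is\<in>idx d. (cmod (eta is))\<^sup>2) = 1"
  proof -
    have "1 = (\<Sum>is\<in>idx d. (cmod (complex_of_real lam * pi is + complex_of_real mu * eta is))\<^sup>2)"
      using psiN dec by simp
    also have "\<dots> = lam\<^sup>2 + mu\<^sup>2 * (\<Sum>is\<in>idx d. (cmod (eta is))\<^sup>2)"
      unfolding norm_sq_comb using piN' pieta unfolding inner_t_def by simp
    finally have h: "1 = lam\<^sup>2 + (1 - lam\<^sup>2) * (\<Sum>is\<in>idx d. (cmod (eta is))\<^sup>2)" using musq by simp
    have "(1 - lam\<^sup>2) * ((\<Sum>is\<in>idx d. (cmod (eta is))\<^sup>2) - 1) = 0"
      using h by (simp add: algebra_simps)
    then show ?thesis using lam2lt by simp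
  qed
  have innpsi: "\<And>q. inner_t d q psi = complex_of_real lam * inner_t d q pi + complex_of_real mu * inner_t d q eta"
  proof -
    fix q
    have "psi = (\<lambda>is. complex_of_real lam * pi is + complex_of_real mu * eta is)" using dec by auto
    then show "inner_t d q psi = complex_of_real lam * inner_t d q pi + complex_of_real mu * inner_t d q eta"
      using inner_lin2 by metis
  qed
  define K where "K = (\<Sum>is\<in>idx d. cmod (pi is)) + (\<Sum>is\<in>idx d. cmod (eta is))"
  have Kb: "\<forall>q\<in>{q. product_state d q}. cmod (inner_t d q pi) \<le> K \<and> cmod (inner_t d q eta) \<le> K"
  proof
    fix q assume "q \<in> {q. product_state d q}"
    then have q: "product_state d q" by simp
    have s1: "0 \<le> (\<Sum>is\<in>idx d. cmod (pi is))" "0 \<le> (\<Sum>is\<in>idx d. cmod (eta is))"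
      by (simp_all add: sum_nonneg)
    show "cmod (inner_t d q pi) \<le> K \<and> cmod (inner_t d q eta) \<le> K"
      using inner_bound[OF q, of pi] inner_bound[OF q, of eta] s1 unfolding K_def by linarith
  qed
  have F0: "\<forall>q\<in>{q. product_state d q}. (cmod (complex_of_real lam * inner_t d q pi + complex_of_real mu * inner_t d q eta))\<^sup>2 \<le> lam\<^sup>2"
    using bestq innpsi by simp
  have stepA: "\<exists>\<rho>>0. \<forall>q\<in>{q. product_state d q}.
      (cmod (complex_of_real lam * inner_t d q pi + complex_of_real mu * inner_t d q eta))\<^sup>2 - lam\<^sup>2 > - \<rho> \<longrightarrow>
      2 * lam * Re (cnj (inner_t d q pi) * inner_t d q eta) + 2 * mu * ((cmod (inner_t d q eta))\<^sup>2 - lam\<^sup>2) \<le> - (mu * lam\<^sup>2)"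
  proof (rule ccontr)
    define Fm where "Fm = (\<lambda>q. (cmod (inner_t d q psi))\<^sup>2 - lam\<^sup>2)"
    define Fd where "Fd = (\<lambda>q. 2 * lam * Re (cnj (inner_t d q pi) * inner_t d q eta) + 2 * mu * ((cmod (inner_t d q eta))\<^sup>2 - lam\<^sup>2))"
    assume "\<not> ?thesis"
    then have "\<forall>\<rho>>0. \<exists>q. product_state d q \<and> Fm q > - \<rho> \<and> Fd q > - (mu * lam\<^sup>2)"
      unfolding Fm_def Fd_def using innpsi by (auto simp: not_le)
    then have "\<forall>n. \<exists>q. product_state d q \<and> Fm q > - inverse (real (Suc n)) \<and> Fd q > - (mu * lam\<^sup>2)"
      by simp
    then obtain qs where qs: "\<And>n. product_state d (qs n)" "\<And>n. Fm (qs n) > - inverse (real (Suc n))"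
      "\<And>n. Fd (qs n) > - (mu * lam\<^sup>2)"
      by metis
    obtain r p where r: "strict_mono r" "product_state d p" "\<forall>is. (\<lambda>n. qs (r n) is) \<longlonglongrightarrow> p is"
      using ps_seq_compact[of d qs, OF qs(1)] by blast
    have cv: "\<And>f. (\<lambda>n. inner_t d (qs (r n)) f) \<longlonglongrightarrow> inner_t d p f"
      using inner_tendsto[OF r(3)] .
    have FmL: "(\<lambda>n. Fm (qs (r n))) \<longlonglongrightarrow> Fm p" unfolding Fm_def by (intro tendsto_intros cv)
    have FdL: "(\<lambda>n. Fd (qs (r n))) \<longlonglongrightarrow> Fd p" unfolding Fd_def by (intro tendsto_intros cv)
    have "- inverse (real (Suc n)) \<le> Fm (qs (r n))" for n
    proof -
      have "n \<le> r n" using seq_suble[OF r(1)] .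
      then have "inverse (real (Suc (r n))) \<le> inverse (real (Suc n))"
        by (intro le_imp_inverse_le) auto
      then show ?thesis using qs(2)[of "r n"] by linarith
    qed
    moreover have "(\<lambda>n. - inverse (real (Suc n))) \<longlonglongrightarrow> - 0"
      by (intro tendsto_minus LIMSEQ_inverse_real_of_nat)
    ultimately have "- 0 \<le> Fm p" using FmL by (intro LIMSEQ_le[of "\<lambda>n. - inverse (real (Suc n))" "-0" "\<lambda>n. Fm (qs (r n))"]) auto
    then have "0 \<le> Fm p" by simp
    then have "lam\<^sup>2 \<le> (cmod (inner_t d p psi))\<^sup>2" unfolding Fm_def by simp
    then have "best_approx d psi p"
      unfolding best_approx_def using r(2) bestq order_trans by blast
    then obtain c where c: "cmod c = 1" "p = (\<lambda>is. c * pi is)"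
      using gen best unfolding generic_def by blast
    have "inner_t d p pi = cnj c" unfolding c(2) inner_scal1 piN by simp
    moreover have "inner_t d p eta = 0" unfolding c(2) inner_scal1 pieta by simp
    ultimately have "Fd p = - 2 * mu * lam\<^sup>2" unfolding Fd_def by simp
    moreover have "- (mu * lam\<^sup>2) \<le> Fd p"
      using qs(3) by (intro LIMSEQ_le_const[OF FdL]) (auto intro: less_imp_le)
    moreover have "mu * lam\<^sup>2 > 0" using mupos lampos by simp
    ultimately show False by simp
  qed
  then obtain \<rho> where \<rho>: "\<rho> > 0" and FA: "\<forall>q\<in>{q. product_state d q}.
      (cmod (complex_of_real lam * inner_t d q pi + complex_of_real mu * inner_t d q eta))\<^sup>2 - lam\<^sup>2 > - \<rho> \<longrightarrow>
      2 * lam * Re (cnj (inner_t d q pi) * inner_t d q eta) + 2 * mu * ((cmod (inner_t d q eta))\<^sup>2 - lam\<^sup>2) \<le> - (mu * lam\<^sup>2)"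
    by blast
  have lm: "lam\<^sup>2 + mu\<^sup>2 = 1" using musq by simp
  obtain \<Theta> where Th: "\<Theta> > 0" and ThP: "\<forall>\<theta>. 0 < \<theta> \<and> \<theta> < \<Theta> \<longrightarrow> (\<exists>e>0. \<forall>q\<in>{q. product_state d q}.
     (cmod (complex_of_real lam * inner_t d q pi + complex_of_real (mu + \<theta>) * inner_t d q eta))\<^sup>2 \<le> lam\<^sup>2 * (lam\<^sup>2 + (mu + \<theta>)\<^sup>2) - e)"
    using stepB[OF lampos mupos lm \<rho> Kb F0 FA] by blast
  define psit where "psit = (\<lambda>\<theta>::real. (\<lambda>is. (psi is + complex_of_real \<theta> * eta is) /
                          complex_of_real (norm_t d (\<lambda>js. psi js + complex_of_real \<theta> * eta js))))"
  have main: "GME d psi < GME d (psit \<theta>)" if th: "0 < \<theta>" "\<theta> < \<Theta>" for \<theta>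
  proof -
    define t where "t = mu + \<theta>"
    obtain e where e: "e > 0" and eb: "\<forall>q\<in>{q. product_state d q}.
       (cmod (complex_of_real lam * inner_t d q pi + complex_of_real t * inner_t d q eta))\<^sup>2 \<le> lam\<^sup>2 * (lam\<^sup>2 + t\<^sup>2) - e"
      using ThP th unfolding t_def by blast
    have v: "(\<lambda>js. psi js + complex_of_real \<theta> * eta js) = (\<lambda>js. complex_of_real lam * pi js + complex_of_real t * eta js)"
      unfolding t_def by (rule ext) (simp add: dec algebra_simps)
    define N2 where "N2 = lam\<^sup>2 + t\<^sup>2"
    have N2pos: "N2 > 0" unfolding N2_def using lampos by (simp add: add_pos_nonneg)
    have nrm: "norm_t d (\<lambda>js. psi js + complex_of_real \<theta> * eta js) = sqrt N2"
      unfolding v norm_t_def norm_sq_comb N2_def using piN' etaN pieta unfolding inner_t_def by simp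
    have ps: "psit \<theta> = (\<lambda>js. (complex_of_real lam * pi js + complex_of_real t * eta js) / complex_of_real (sqrt N2))"
      unfolding psit_def nrm using v by metis
    have bnd: "(cmod (inner_t d q (psit \<theta>)))\<^sup>2 \<le> lam\<^sup>2 - e / N2" if q: "product_state d q" for q
    proof -
      have "inner_t d q (psit \<theta>) = (complex_of_real lam * inner_t d q pi + complex_of_real t * inner_t d q eta) / complex_of_real (sqrt N2)"
        unfolding ps inner_div2 inner_lin2 ..
      then have "(cmod (inner_t d q (psit \<theta>)))\<^sup>2 = (cmod (complex_of_real lam * inner_t d q pi + complex_of_real t * inner_t d q eta))\<^sup>2 / N2"
        using N2pos by (simp add: norm_divide power_divide)
      also have "\<dots> \<le> (lam\<^sup>2 * N2 - e) / N2"
        using eb q N2pos unfolding N2_def by (intro divide_right_mono) auto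
      also have "\<dots> = lam\<^sup>2 - e / N2" using N2pos by (simp add: field_simps)
      finally show ?thesis .
    qed
    have "lambda2 d (psit \<theta>) \<le> lam\<^sup>2 - e / N2"
      unfolding lambda2_def by (rule cSUP_least) (use piP bnd in auto)
    also have "\<dots> < lam\<^sup>2" using e N2pos by simp
    finally show ?thesis unfolding GME_def lamsq by simp
  qed
  have fin: "\<exists>\<Theta>>0. \<forall>\<theta>. 0 < \<theta> \<and> \<theta> < \<Theta> \<longrightarrow> GME d psi < GME d (psit \<theta>)"
    using Th main by auto
  show ?thesis
    unfolding Let_def lam_def[symmetric] using fin unfolding psit_def eta_def .
qed

end
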